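(* Let $\Gamma$ be the first Grigorchuk group with generators $a,b,c,d$, acting on the right on $\{0,1\}^{\mathbb N}$, and let $\rho=111\cdots$. For a word $w=w_1\cdots w_n$ over $\{a,b,c,d\}$ let $\mathcal O(w)=\{\rho\,w_{i+1}\cdots w_n: i=0,\dots,n\}$, and set $\Sigma(n)=\#\{\mathcal O(w): w\text{ a word over }\{a,b,c,d\},\ |w|\le n\}$. Let $\eta$ be the real root of $t^3+t^2+t-2$ and $\alpha=\log 2/\log(2/\eta)$. Then $\Sigma(n)\preceq\exp(n^\alpha)$.
   Context: The first Grigorchuk group $\Gamma$ is the group of permutations of $\{0,1\}^{\mathbb N}$ (acting on the right) generated by $a,b,c,d$, defined recursively for $x\in\{0,1\}$ and infinite binary sequences $u$ by: $(xu)a=(1-x)u$; $(0u)b=0(ua)$, $(1u)b=1(uc)$; $(0u)c=0(ua)$, $(1u)c=1(ud)$; $(0u)d=0u$, $(1u)d=1(ub)$. For functions $f,g:\mathbb N\to\mathbb R_+$, $g\preceq f$ means there is $C>0$ with $g(n)\le f(Cn)$ for all sufficiently large $n$. *)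

theory Defs
  imports Complex_Main
begin

text \<open>Binary sequences: nat \<Rightarrow> bool, with True encoding the letter 1, False the letter 0.\<close>

datatype gen = GA | GB | GC | GD

fun gact :: "gen \<Rightarrow> (nat \<Rightarrow> bool) \<Rightarrow> nat \<Rightarrow> bool" where
  "gact GA u 0 = (\<not> u 0)"
| "gact GA u (Suc k) = u (Suc k)"
| "gact GB u 0 = u 0"
| "gact GB u (Suc k) = (if \<not> u 0 then gact GA (\<lambda>j. u (Suc j)) k else gact GC (\<lambda>j. u (Suc j)) k)"
| "gact GC u 0 = u 0"
| "gact GC u (Suc k) = (if \<not> u 0 then gact GA (\<lambda>j. u (Suc j)) k else gact GD (\<lambda>j. u (Suc j)) k)"
| "gact GD u 0 = u 0"
| "gact GD u (Suc k) = (if \<not> u 0 then u (Suc k) else gact GB (\<lambda>j. u (Suc j)) k)"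

definition act_word :: "(nat \<Rightarrow> bool) \<Rightarrow> gen list \<Rightarrow> (nat \<Rightarrow> bool)" where
  "act_word u w = foldl (\<lambda>v g. gact g v) u w"

definition rho :: "nat \<Rightarrow> bool" where
  "rho = (\<lambda>_. True)"

definition orbit_set :: "gen list \<Rightarrow> (nat \<Rightarrow> bool) set" where
  "orbit_set w = {act_word rho (drop i w) | i. i \<le> length w}"

definition Sigma_count :: "nat \<Rightarrow> nat" where
  "Sigma_count n = card {orbit_set w | w. length w \<le> n}"

definition eta :: real where
  "eta = (THE t::real. t ^ 3 + t ^ 2 + t - 2 = 0)"

definition alpha :: real where
  "alpha = ln 2 / ln (2 / eta)"

end

theory Submission
  imports Defs
begin

lemma eta_props: "0 < eta \<and> eta < 1 \<and> eta^3 + eta^2 + eta = 2"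
proof -
  let ?f = "\<lambda>t::real. t ^ 3 + t ^ 2 + t - 2"
  have ex: "\<exists>x. 0 \<le> x \<and> x \<le> 1 \<and> ?f x = 0"
    by (rule IVT) (auto intro!: continuous_intros)
  have loc: "0 < t \<and> t < 1" if "?f t = 0" for t :: real
  proof -
    have "t > 0"
    proof (rule ccontr)
      assume "\<not> t > 0"
      hence "t \<le> 0" by simp
      have e: "t^2 + t + 1 = (t + 1/2)^2 + 3/4" by (simp add: power2_eq_square algebra_simps)
      have "t^2 + t + 1 > 0" unfolding e by (simp add: add_nonneg_pos)
      hence "t * (t^2+t+1) \<le> 0" using \<open>t \<le> 0\<close> by (simp add: mult_nonpos_nonneg)
      moreover have "t * (t^2+t+1) = ?f t + 2" by (simp add: algebra_simps power3_eq_cube power2_eq_square)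
      ultimately show False using that by simp
    qed
    moreover have "t < 1"
    proof (rule ccontr)
      assume "\<not> t < 1"
      hence "t \<ge> 1" by simp
      hence "t^3 \<ge> 1" "t^2 \<ge> 1" by (simp_all add: one_le_power)
      thus False using that \<open>t \<ge> 1\<close> by linarith
    qed
    ultimately show ?thesis by simp
  qed
  have uniq: "s = t" if "?f s = 0" "?f t = 0" for s t :: real
  proof (rule ccontr)
    assume "s \<noteq> t"
    have ps: "s > 0" "t > 0" using loc that by auto
    { fix x y :: real assume "0 < x" "x < y"
      hence "x^3 < y^3" "x^2 < y^2" by (simp_all add: power_strict_mono)
      hence "?f x < ?f y" using \<open>x < y\<close> by simp }
    note m = this
    show False
    proof (cases "s < t")
      case True thus False using m[of s t] ps that by linarith
    next
      case False hence "t < s" using \<open>s \<noteq> t\<close> by linarith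
      thus False using m[of t s] ps that by linarith
    qed
  qed
  obtain x where x: "?f x = 0" using ex by auto
  have "eta = x" unfolding eta_def
    proof (rule the_equality)
    show "x ^ 3 + x ^ 2 + x - 2 = 0" using x by simp
    fix t :: real assume "t ^ 3 + t ^ 2 + t - 2 = 0" thus "t = x" using uniq[of t x] x by simp
  qed
  thus ?thesis using x loc[OF x] by simp
qed

type_synonym seq = "nat \<Rightarrow> bool"

definition cns :: "bool \<Rightarrow> seq \<Rightarrow> seq" where
  "cns x u = (\<lambda>k. case k of 0 \<Rightarrow> x | Suc j \<Rightarrow> u j)"

lemma cns_eq: "cns (u 0) (\<lambda>j. u (Suc j)) = u"
  by (rule ext, simp add: cns_def split: nat.split)

lemma cns_inj: "cns a u = cns b v \<longleftrightarrow> a = b \<and> u = v"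
proof
  assume h: "cns a u = cns b v"
  have "a = b" using fun_cong[OF h, of 0] by (simp add: cns_def)
  moreover have "u = v"
  proof
    fix j show "u j = v j" using fun_cong[OF h, of "Suc j"] by (simp add: cns_def)
  qed
  ultimately show "a = b \<and> u = v" ..
qed simp

lemma gA_cns: "gact GA (cns c u) = cns (\<not> c) u"
  by (rule ext, case_tac x) (simp_all add: cns_def)
lemma gB_cns: "gact GB (cns c u) = cns c (if c then gact GC u else gact GA u)"
  by (rule ext, case_tac x) (simp_all add: cns_def)
lemma gC_cns: "gact GC (cns c u) = cns c (if c then gact GD u else gact GA u)"
  by (rule ext, case_tac x) (simp_all add: cns_def)
lemma gD_cns: "gact GD (cns c u) = cns c (if c then gact GB u else u)"
  by (rule ext, case_tac x) (simp_all add: cns_def)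

lemma gAA: "gact GA (gact GA u) = u"
  by (rule ext, case_tac x) simp_all

lemma rho_cns: "rho = cns True rho"
  by (rule ext, simp add: rho_def cns_def split: nat.split)

lemma rho_fix_aux: "gact GB rho k \<and> gact GC rho k \<and> gact GD rho k"
  by (induction k) (simp_all add: rho_def)

lemma rho_fix: "gact GB rho = rho" "gact GC rho = rho" "gact GD rho = rho"
  using rho_fix_aux by (auto simp: rho_def)

lemma act_word_Nil[simp]: "act_word u [] = u"
  by (simp add: act_word_def)
lemma act_word_Cons[simp]: "act_word u (x # w) = act_word (gact x u) w"
  by (simp add: act_word_def)
lemma act_word_append: "act_word u (xs @ ys) = act_word (act_word u xs) ys"
  by (simp add: act_word_def)

lemma act_rho_nonA: "set xs \<subseteq> {GB, GC, GD} \<Longrightarrow> act_word rho xs = rho"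
  by (induction xs) (auto simp: rho_fix)

lemma orbit_set_Nil: "orbit_set [] = {rho}"
  by (auto simp: orbit_set_def)

lemma orbit_set_Cons: "orbit_set (x # w) = insert (act_word rho (x # w)) (orbit_set w)"
proof
  show "orbit_set (x # w) \<subseteq> insert (act_word rho (x # w)) (orbit_set w)"
  proof
    fix p assume "p \<in> orbit_set (x # w)"
    then obtain i where i: "i \<le> length (x # w)" "p = act_word rho (drop i (x # w))"
      by (auto simp: orbit_set_def)
    show "p \<in> insert (act_word rho (x # w)) (orbit_set w)"
    proof (cases i)
      case 0 thus ?thesis using i by simp
    next
      case (Suc j) thus ?thesis using i by (auto simp: orbit_set_def)
    qed
  qed
next
  show "insert (act_word rho (x # w)) (orbit_set w) \<subseteq> orbit_set (x # w)"
  proof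
    fix p assume "p \<in> insert (act_word rho (x # w)) (orbit_set w)"
    moreover have "act_word rho (x # w) \<in> orbit_set (x # w)"
      unfolding orbit_set_def by (rule CollectI, rule exI[of _ 0]) simp
    moreover have "q \<in> orbit_set (x # w)" if qw: "q \<in> orbit_set w" for q
    proof -
      obtain i where "i \<le> length w" "q = act_word rho (drop i w)"
        using qw by (auto simp: orbit_set_def)
      thus ?thesis unfolding orbit_set_def
        by (intro CollectI exI[of _ "Suc i"]) simp
    qed
    ultimately show "p \<in> orbit_set (x # w)" by blast
  qed
qed

datatype vv = V1 | VB | VC | VD

fun vact :: "vv \<Rightarrow> seq \<Rightarrow> seq" where
  "vact V1 u = u" | "vact VB u = gact GB u" | "vact VC u = gact GC u" | "vact VD u = gact GD u"

fun sec1v :: "vv \<Rightarrow> vv" where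
  "sec1v V1 = V1" | "sec1v VB = VC" | "sec1v VC = VD" | "sec1v VD = VB"
fun s0 :: "vv \<Rightarrow> bool" where
  "s0 V1 = False" | "s0 VB = True" | "s0 VC = True" | "s0 VD = False"

fun vmul :: "vv \<Rightarrow> vv \<Rightarrow> vv" where
  "vmul V1 y = y" | "vmul x V1 = x"
| "vmul VB VB = V1" | "vmul VB VC = VD" | "vmul VB VD = VC"
| "vmul VC VB = VD" | "vmul VC VC = V1" | "vmul VC VD = VB"
| "vmul VD VB = VC" | "vmul VD VC = VB" | "vmul VD VD = V1"

lemma vact_cns: "vact x (cns c u) = cns c (if c then vact (sec1v x) u else (if s0 x then gact GA u else u))"
  by (cases x) (simp_all add: gB_cns gC_cns gD_cns)

lemma sec1v_mul: "sec1v (vmul x y) = vmul (sec1v x) (sec1v y)"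
  by (cases x; cases y) simp_all
lemma s0_mul: "s0 (vmul x y) = (s0 x \<noteq> s0 y)"
  by (cases x; cases y) simp_all

lemma vact_mul_aux: "\<forall>x y u. vact y (vact x u) k = vact (vmul x y) u k"
proof (induction k)
  case 0
  show ?case
  proof (intro allI)
    fix x y u
    show "vact y (vact x u) 0 = vact (vmul x y) u 0"
      by (cases x; cases y) simp_all
  qed
next
  case (Suc k)
  show ?case
  proof (intro allI)
    fix x y u
    have u: "u = cns (u 0) (\<lambda>j. u (Suc j))" by (simp add: cns_eq)
    let ?c = "u 0" and ?t = "\<lambda>j. u (Suc j)"
    have "vact y (vact x u) (Suc k) = vact y (vact x (cns ?c ?t)) (Suc k)" using u by simp
    also have "\<dots> = vact (vmul x y) (cns ?c ?t) (Suc k)"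
    proof (cases ?c)
      case True
      have "vact y (vact x (cns ?c ?t)) (Suc k) = vact (sec1v y) (vact (sec1v x) ?t) k"
        using True by (simp only: vact_cns if_True) (simp add: cns_def)
      also have "\<dots> = vact (vmul (sec1v x) (sec1v y)) ?t k" using Suc.IH by blast
      also have "\<dots> = vact (vmul x y) (cns ?c ?t) (Suc k)"
        using True by (simp only: vact_cns if_True sec1v_mul) (simp add: cns_def)
      finally show ?thesis .
    next
      case False
      have "vact y (vact x (cns ?c ?t)) (Suc k) = (if s0 y then gact GA else id) ((if s0 x then gact GA else id) ?t) k"
        using False by (simp only: vact_cns if_False) (simp add: cns_def)
      also have "\<dots> = (if s0 (vmul x y) then gact GA else id) ?t k"
        by (simp add: s0_mul gAA)
      also have "\<dots> = vact (vmul x y) (cns ?c ?t) (Suc k)"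
        using False by (simp only: vact_cns if_False) (simp add: cns_def)
      finally show ?thesis .
    qed
    also have "\<dots> = vact (vmul x y) u (Suc k)" using u by simp
    finally show "vact y (vact x u) (Suc k) = vact (vmul x y) u (Suc k)" .
  qed
qed

lemma vact_mul: "vact (vmul x y) u = vact y (vact x u)"
  using vact_mul_aux by auto

fun g2v :: "gen \<Rightarrow> vv" where
  "g2v GA = V1" | "g2v GB = VB" | "g2v GC = VC" | "g2v GD = VD"

primrec dec :: "gen list \<Rightarrow> vv \<times> vv list" where
  "dec [] = (V1, [])"
| "dec (x # w) = (if x = GA then (V1, fst (dec w) # snd (dec w))
                  else (vmul (g2v x) (fst (dec w)), snd (dec w)))"

fun ev :: "vv list \<Rightarrow> seq \<Rightarrow> seq" where
  "ev [] u = u" | "ev (x # s) u = ev s (vact x (gact GA u))"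

lemma gact_g2v: "x \<noteq> GA \<Longrightarrow> gact x u = vact (g2v x) u"
  by (cases x) simp_all

lemma act_dec: "act_word u w = ev (snd (dec w)) (vact (fst (dec w)) u)"
proof (induction w arbitrary: u)
  case Nil show ?case by simp
next
  case (Cons x w)
  show ?case
  proof (cases "x = GA")
    case True thus ?thesis using Cons.IH by simp
  next
    case False thus ?thesis using Cons.IH by (simp add: gact_g2v vact_mul)
  qed
qed

definition Tset :: "vv list \<Rightarrow> seq set" where
  "Tset s = insert rho {ev (drop j s) rho | j. j < length s}"

lemma drop_set_Cons:
  "{f (drop j (y # s)) | j. j < length (y # s)} = insert (f (y # s)) {f (drop j s) | j. j < length s}"
proof
  show "{f (drop j (y # s)) | j. j < length (y # s)} \<subseteq> insert (f (y # s)) {f (drop j s) | j. j < length s}"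
  proof
    fix p assume "p \<in> {f (drop j (y # s)) | j. j < length (y # s)}"
    then obtain j where j: "j < length (y # s)" "p = f (drop j (y # s))" by blast
    show "p \<in> insert (f (y # s)) {f (drop j s) | j. j < length s}"
    proof (cases j)
      case 0 thus ?thesis using j by simp
    next
      case (Suc i) thus ?thesis using j by auto
    qed
  qed
next
  show "insert (f (y # s)) {f (drop j s) | j. j < length s} \<subseteq> {f (drop j (y # s)) | j. j < length (y # s)}"
  proof
    fix p assume "p \<in> insert (f (y # s)) {f (drop j s) | j. j < length s}"
    moreover have "f (y # s) \<in> {f (drop j (y # s)) | j. j < length (y # s)}"
      by (intro CollectI exI[of _ 0]) simp
    moreover have "f (drop i s) \<in> {f (drop j (y # s)) | j. j < length (y # s)}" if "i < length s" for i
      using that by (intro CollectI exI[of _ "Suc i"]) simp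
    ultimately show "p \<in> {f (drop j (y # s)) | j. j < length (y # s)}" by blast
  qed
qed

lemma Tset_Cons: "Tset (y # s) = insert (ev (y # s) rho) (Tset s)"
  unfolding Tset_def using drop_set_Cons[of "\<lambda>t. ev t rho" y s] by auto

lemma orbit_Tset: "orbit_set w = Tset (snd (dec w))"
proof (induction w)
  case Nil show ?case by (simp add: orbit_set_Nil Tset_def)
next
  case (Cons x w)
  show ?case
  proof (cases "x = GA")
    case True
    have "act_word rho (x # w) = ev (fst (dec w) # snd (dec w)) rho"
      using True by (simp add: act_dec[of _ w])
    thus ?thesis using True Cons.IH by (simp add: orbit_set_Cons Tset_Cons)
  next
    case False
    have "act_word rho (x # w) = act_word rho w"
      using False by (cases x) (simp_all add: rho_fix)
    moreover have "act_word rho w \<in> orbit_set w"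
      unfolding orbit_set_def by (intro CollectI exI[of _ 0]) simp
    ultimately show ?thesis using False Cons.IH by (simp add: orbit_set_Cons insert_absorb)
  qed
qed

definition wa :: real where "wa = 1 - eta ^ 3"

fun om :: "vv \<Rightarrow> real" where
  "om V1 = 0" | "om VB = eta ^ 3" | "om VC = 1 - eta ^ 2" | "om VD = 1 - eta"

definition wt :: "vv list \<Rightarrow> real" where "wt s = (\<Sum>x\<leftarrow>s. wa + om x)"

fun gw :: "gen \<Rightarrow> real" where
  "gw GA = wa" | "gw GB = eta ^ 3" | "gw GC = 1 - eta ^ 2" | "gw GD = 1 - eta"

definition gsum :: "gen list \<Rightarrow> real" where "gsum w = (\<Sum>x\<leftarrow>w. gw x)"

lemma eta_pows: "0 < eta" "eta < 1" "eta ^ 3 = 2 - eta ^ 2 - eta" "0 < eta ^ 2" "eta ^ 2 < eta"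
  "0 < eta ^ 3" "eta ^ 3 < eta ^ 2"
proof -
  have e: "0 < eta" "eta < 1" "eta^3 + eta^2 + eta = 2" using eta_props by auto
  show "0 < eta" "eta < 1" "eta ^ 3 = 2 - eta ^ 2 - eta" using e by auto
  show "0 < eta ^ 2" "0 < eta ^ 3" using e by auto
  show "eta ^ 2 < eta" using e by (simp add: power2_eq_square)
  show "eta ^ 3 < eta ^ 2" using e by (simp add: power3_eq_cube power2_eq_square)
qed

lemma wa_pos: "0 < wa" and wa_le1: "wa \<le> 1"
  using eta_pows by (auto simp: wa_def)

lemma om_nonneg: "0 \<le> om x"
  using eta_pows by (cases x) auto

lemma om_le1: "om x \<le> 1"
  using eta_pows by (cases x) auto

lemma om_mul: "om (vmul x y) \<le> om x + om y"
  using eta_pows om_nonneg by (cases x; cases y) auto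

lemma gw_le1: "gw x \<le> 1"
  using eta_pows wa_le1 by (cases x) auto

lemma gw_g2v: "x \<noteq> GA \<Longrightarrow> gw x = om (g2v x)"
  by (cases x) auto

lemma wt_Cons: "wt (x # s) = wa + om x + wt s"
  by (simp add: wt_def)
lemma gsum_Cons: "gsum (x # s) = gw x + gsum s"
  by (simp add: gsum_def)
lemma gsum_append: "gsum (xs @ ys) = gsum xs + gsum ys"
  by (simp add: gsum_def)

lemma wt_dec: "wt (snd (dec w)) + om (fst (dec w)) \<le> gsum w"
proof (induction w)
  case Nil show ?case by (simp add: wt_def gsum_def)
next
  case (Cons x w)
  show ?case
  proof (cases "x = GA")
    case True thus ?thesis using Cons.IH by (simp add: wt_Cons gsum_Cons)
  next
    case False
    have "om (vmul (g2v x) (fst (dec w))) \<le> gw x + om (fst (dec w))"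
      using om_mul gw_g2v[OF False] by simp
    thus ?thesis using False Cons.IH by (simp add: gsum_Cons)
  qed
qed

lemma gsum_le_length: "gsum w \<le> length w"
  by (induction w) (auto simp: gsum_def intro: add_mono[OF gw_le1, simplified])

lemma wt_ge: "wa * length s \<le> wt s"
  by (induction s) (auto simp: wt_Cons wt_def algebra_simps om_nonneg add_increasing)

lemma wt_nonneg: "0 \<le> wt s"
  using wt_ge[of s] wa_pos by (smt (verit) of_nat_0_le_iff zero_le_mult_iff)

definition sec0 :: "vv \<Rightarrow> gen list" where "sec0 x = (if s0 x then [GA] else [])"
fun sec1 :: "vv \<Rightarrow> gen list" where
  "sec1 V1 = []" | "sec1 VB = [GC]" | "sec1 VC = [GD]" | "sec1 VD = [GB]"

lemma vact_cns2: "vact x (cns c u) = cns c (act_word u (if c then sec1 x else sec0 x))"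
  by (cases x) (simp_all add: gB_cns gC_cns gD_cns sec0_def)

primrec secw :: "bool \<Rightarrow> vv list \<Rightarrow> gen list" where
  "secw b [] = []"
| "secw b (x # s) = (if b then sec0 x else sec1 x) @ secw (\<not> b) s"

lemma ev_cns: "ev s (cns b u) = cns (b = even (length s)) (act_word u (secw b s))"
proof (induction s arbitrary: b u)
  case Nil show ?case by simp
next
  case (Cons x s)
  have "ev (x # s) (cns b u) = ev s (cns (\<not> b) (act_word u (if b then sec0 x else sec1 x)))"
    by (simp add: gA_cns vact_cns2)
  also have "\<dots> = cns (b = even (length (x # s))) (act_word u (secw b (x # s)))"
    using Cons.IH by (simp add: act_word_append)
  finally show ?case .
qed

lemma drop_set_Cons_P:
  "{f (drop j (y # s)) | j. j < length (y # s) \<and> P j} =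
   (if P 0 then insert (f (y # s)) else id) {f (drop j s) | j. j < length s \<and> P (Suc j)}"
    (is "?L = ?R")
proof (intro equalityI subsetI)
  fix p assume "p \<in> ?L"
  then obtain j where j: "j < length (y # s)" "P j" "p = f (drop j (y # s))" by blast
  show "p \<in> ?R"
  proof (cases j)
    case 0 thus ?thesis using j by simp
  next
    case (Suc i)
    hence "p \<in> {f (drop j s) | j. j < length s \<and> P (Suc j)}"
      using j by (intro CollectI exI[of _ i]) simp
    thus ?thesis by (cases "P 0") simp_all
  qed
next
  fix p assume p: "p \<in> ?R"
  show "p \<in> ?L"
  proof (cases "p = f (y # s) \<and> P 0")
    case True thus ?thesis by (intro CollectI exI[of _ 0]) simp
  next
    case False
    hence "p \<in> {f (drop j s) | j. j < length s \<and> P (Suc j)}" using p by (cases "P 0") auto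
    then obtain j where "j < length s" "P (Suc j)" "p = f (drop j s)" by blast
    thus ?thesis by (intro CollectI exI[of _ "Suc j"]) simp
  qed
qed

definition Pset :: "bool \<Rightarrow> vv list \<Rightarrow> seq set" where
  "Pset b s = {act_word rho (secw True (drop j s)) | j. j < length s \<and> even j = b}"

lemma Pset_Cons: "Pset b (x # s) = (if b then insert (act_word rho (secw True (x # s))) else id) (Pset (\<not> b) s)"
  unfolding Pset_def using drop_set_Cons_P[of "\<lambda>t. act_word rho (secw True t)" x s "\<lambda>j. even j = b"]
  by simp

lemma in_orbit0: "act_word rho w \<in> orbit_set w"
  unfolding orbit_set_def by (intro CollectI exI[of _ 0]) simp

lemma orbit_secw: "orbit_set (secw b s) = insert rho (Pset b s)"
proof (induction s arbitrary: b)
  case Nil show ?case by (simp add: orbit_set_Nil Pset_def)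
next
  case (Cons x s)
  show ?case
  proof (cases b)
    case True
    have IH: "orbit_set (secw False s) = insert rho (Pset False s)" using Cons.IH by simp
    have "orbit_set (secw True (x # s)) = insert (act_word rho (secw True (x # s))) (orbit_set (secw False s))"
      using in_orbit0[of "secw False s"]
      by (cases "s0 x") (simp_all add: sec0_def orbit_set_Cons insert_absorb)
    thus ?thesis using True IH by (simp add: Pset_Cons insert_commute)
  next
    case False
    have IH: "orbit_set (secw True s) = insert rho (Pset True s)" using Cons.IH by simp
    have "orbit_set (secw False (x # s)) = orbit_set (secw True s)"
      using in_orbit0[of "secw True s"]
      by (cases x) (simp_all add: orbit_set_Cons insert_absorb rho_fix)
    thus ?thesis using False IH by (simp add: Pset_Cons)
  qed
qed

lemma Tset_split:
  "Tset s = insert rho (cns (even (length s)) ` Pset True s \<union> cns (odd (length s)) ` Pset False s)"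
proof -
  have e: "ev (drop j s) rho = cns (even (length s) = even j) (act_word rho (secw True (drop j s)))"
    if "j < length s" for j
  proof -
    have "ev (drop j s) rho = cns (even (length s - j)) (act_word rho (secw True (drop j s)))"
      by (subst rho_cns) (simp add: ev_cns)
    moreover have "even (length s - j) = (even (length s) = even j)" using that by (simp add: even_diff_nat)
    ultimately show ?thesis by simp
  qed
  have "{ev (drop j s) rho | j. j < length s} =
        cns (even (length s)) ` Pset True s \<union> cns (odd (length s)) ` Pset False s"
    (is "?L = ?R")
  proof (intro equalityI subsetI)
    fix p assume "p \<in> ?L"
    then obtain j where j: "j < length s" "p = ev (drop j s) rho" by blast
    have q: "act_word rho (secw True (drop j s)) \<in> Pset (even j) s"
      unfolding Pset_def using j(1) by blast
    show "p \<in> ?R"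
    proof (cases "even j")
      case True
      have "p = cns (even (length s) = even j) (act_word rho (secw True (drop j s)))" using j(2) e[OF j(1)] by (rule trans)
      hence "p = cns (even (length s)) (act_word rho (secw True (drop j s)))" using True by (simp only: eq_True)
      moreover have "act_word rho (secw True (drop j s)) \<in> Pset True s" using q True by simp
      ultimately show ?thesis by (intro UnI1 image_eqI)
    next
      case False
      have "p = cns (even (length s) = even j) (act_word rho (secw True (drop j s)))" using j(2) e[OF j(1)] by (rule trans)
      hence "p = cns (odd (length s)) (act_word rho (secw True (drop j s)))" using False by simp
      moreover have "act_word rho (secw True (drop j s)) \<in> Pset False s" using q False by simp
      ultimately show ?thesis by (intro UnI2 image_eqI)
    qed
  next
    fix p assume "p \<in> ?R"
    then obtain b q where bq: "q \<in> Pset b s" "p = cns (even (length s) = b) q"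
    proof
      assume "p \<in> cns (even (length s)) ` Pset True s"
      then obtain q where "q \<in> Pset True s" "p = cns (even (length s)) q" by blast
      thus ?thesis using that[of q True] by simp
    next
      assume "p \<in> cns (odd (length s)) ` Pset False s"
      then obtain q where "q \<in> Pset False s" "p = cns (odd (length s)) q" by blast
      thus ?thesis using that[of q False] by simp
    qed
    then obtain j where j: "j < length s" "even j = b" "q = act_word rho (secw True (drop j s))"
      unfolding Pset_def by blast
    have "p = ev (drop j s) rho" using bq(2) j(2,3) e[OF j(1)] by simp
    thus "p \<in> ?L" using j(1) by blast
  qed
  thus ?thesis unfolding Tset_def by simp
qed

datatype sym = S vv | Sep | Bt bool

fun code :: "nat \<Rightarrow> vv list \<Rightarrow> sym list" where
  "code 0 s = map S s @ [Sep]"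
| "code (Suc k) s = [Bt (even (length s)), Bt (rho \<in> Pset True s), Bt (rho \<in> Pset False s)]
      @ code k (snd (dec (secw True s))) @ code k (snd (dec (secw False s)))"

lemma sep_split: "map S a @ Sep # r = map S b @ Sep # r' \<Longrightarrow> a = b \<and> r = r'"
proof (induction a arbitrary: b)
  case Nil thus ?case by (cases b) auto
next
  case (Cons x a) thus ?case by (cases b) auto
qed

lemma code_prefix: "code k a @ r = code k b @ r' \<Longrightarrow> code k a = code k b \<and> r = r'"
proof (induction k arbitrary: a b r r')
  case 0 thus ?case using sep_split[of a r b r'] by simp
next
  case (Suc k)
  let ?a0 = "code k (snd (dec (secw True a)))" and ?a1 = "code k (snd (dec (secw False a)))"
  let ?b0 = "code k (snd (dec (secw True b)))" and ?b1 = "code k (snd (dec (secw False b)))"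
  have h: "?a0 @ (?a1 @ r) = ?b0 @ (?b1 @ r')" and bits:
    "even (length a) = even (length b)" "(rho \<in> Pset True a) = (rho \<in> Pset True b)"
    "(rho \<in> Pset False a) = (rho \<in> Pset False b)"
    using Suc.prems by simp_all
  from Suc.IH[OF h] have 1: "?a0 = ?b0" and h2: "?a1 @ r = ?b1 @ r'" by auto
  from Suc.IH[OF h2] have 2: "?a1 = ?b1" and "r = r'" by auto
  thus ?case using 1 2 bits by simp
qed

lemma insert_cancel: "insert x A = insert x B \<Longrightarrow> (x \<in> A) = (x \<in> B) \<Longrightarrow> A = B"
  by (metis insert_absorb Diff_insert_absorb)

lemma code_det: "code k s = code k t \<Longrightarrow> Tset s = Tset t"
proof (induction k arbitrary: s t)
  case 0 thus ?case using sep_split[of s "[]" t "[]"] by simp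
next
  case (Suc k)
  have h: "code k (snd (dec (secw True s))) @ code k (snd (dec (secw False s))) =
           code k (snd (dec (secw True t))) @ code k (snd (dec (secw False t)))"
    and bits: "even (length s) = even (length t)" "(rho \<in> Pset True s) = (rho \<in> Pset True t)"
    "(rho \<in> Pset False s) = (rho \<in> Pset False t)"
    using Suc.prems by simp_all
  from code_prefix[OF h] have c1: "code k (snd (dec (secw True s))) = code k (snd (dec (secw True t)))"
    and c2: "code k (snd (dec (secw False s))) = code k (snd (dec (secw False t)))" by auto
  have "insert rho (Pset True s) = insert rho (Pset True t)"
    using Suc.IH[OF c1] by (simp add: orbit_secw[symmetric] orbit_Tset)
  hence P1: "Pset True s = Pset True t" using bits(2) by (rule insert_cancel)
  have "insert rho (Pset False s) = insert rho (Pset False t)"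
    using Suc.IH[OF c2] by (simp add: orbit_secw[symmetric] orbit_Tset)
  hence P2: "Pset False s = Pset False t" using bits(3) by (rule insert_cancel)
  show ?case by (simp only: Tset_split P1 P2 bits(1))
qed

lemma phi_bound: "gsum (sec0 x) + gsum (sec1 x) \<le> eta * (wa + om x)"
proof -
  have e3: "eta ^ 3 = 2 - eta ^ 2 - eta" using eta_pows by simp
  have e4: "eta * eta ^ 3 = 3 * eta - 2"
  proof -
    have "eta * eta ^ 3 = eta * (2 - eta ^ 2 - eta)" using e3 by simp
    also have "\<dots> = 2 * eta - eta ^ 3 - eta ^ 2" by (simp add: algebra_simps power2_eq_square power3_eq_cube)
    finally show ?thesis using e3 by simp
  qed
  have e2: "eta * eta ^ 2 = eta ^ 3" by (simp add: power2_eq_square power3_eq_cube)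
  show ?thesis
  proof (cases x)
    case V1 thus ?thesis using eta_pows wa_pos by (simp add: sec0_def gsum_def)
  next
    case VB
    have "wa + om x = 1" using VB by (simp add: wa_def)
    hence "eta * (wa + om x) = eta" by simp
    moreover have "gsum (sec0 x) + gsum (sec1 x) = 2 - eta^3 - eta^2" using VB by (simp add: sec0_def gsum_def wa_def)
    ultimately show ?thesis using e3 by linarith
  next
    case VC
    have "eta * (wa + om x) = 2 * eta - eta * eta ^ 3 - eta * eta ^ 2" using VC by (simp add: wa_def algebra_simps)
    moreover have "gsum (sec0 x) + gsum (sec1 x) = 2 - eta^3 - eta" using VC by (simp add: sec0_def gsum_def wa_def)
    ultimately show ?thesis using e3 e4 e2 by simp
  next
    case VD
    have "eta * (wa + om x) = 2 * eta - eta * eta ^ 3 - eta * eta" using VD by (simp add: wa_def algebra_simps)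
    moreover have "gsum (sec0 x) + gsum (sec1 x) = eta ^ 3" using VD by (simp add: sec0_def gsum_def)
    ultimately show ?thesis using e3 e4 by (simp add: power2_eq_square)
  qed
qed

lemma gsum_secw: "gsum (secw b s) + gsum (secw (\<not> b) s) \<le> eta * wt s"
proof (induction s arbitrary: b)
  case Nil show ?case by (simp add: gsum_def wt_def)
next
  case (Cons x s)
  have "gsum (secw b (x # s)) + gsum (secw (\<not> b) (x # s)) =
        (gsum (sec0 x) + gsum (sec1 x)) + (gsum (secw (\<not> b) s) + gsum (secw b s))"
    by (cases b) (simp_all add: gsum_append)
  also have "\<dots> \<le> eta * (wa + om x) + eta * wt s"
    using phi_bound[of x] Cons.IH[of "\<not> b"] by simp
  also have "\<dots> = eta * wt (x # s)" by (simp add: wt_Cons algebra_simps)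
  finally show ?case .
qed

lemma wt_le_gsum: "wt (snd (dec w)) \<le> gsum w"
  using wt_dec[of w] om_nonneg[of "fst (dec w)"] by simp

lemma contraction: "wt (snd (dec (secw True s))) + wt (snd (dec (secw False s))) \<le> eta * wt s"
  using wt_le_gsum[of "secw True s"] wt_le_gsum[of "secw False s"] gsum_secw[of True s] by simp

lemma code_length: "real (length (code k s)) \<le> 4 * 2 ^ k - 3 + eta ^ k * wt s / wa"
proof (induction k arbitrary: s)
  case 0
  have "wa * length s \<le> wt s" by (rule wt_ge)
  hence "real (length s) \<le> wt s / wa" using wa_pos by (simp add: field_simps)
  thus ?case by simp
next
  case (Suc k)
  let ?s0 = "snd (dec (secw True s))" and ?s1 = "snd (dec (secw False s))"
  have "real (length (code (Suc k) s)) = 3 + real (length (code k ?s0)) + real (length (code k ?s1))"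
    by simp
  also have "\<dots> \<le> 3 + (4 * 2 ^ k - 3 + eta ^ k * wt ?s0 / wa) + (4 * 2 ^ k - 3 + eta ^ k * wt ?s1 / wa)"
    using Suc.IH[of ?s0] Suc.IH[of ?s1] by linarith
  also have "\<dots> = 4 * 2 ^ Suc k - 3 + eta ^ k * (wt ?s0 + wt ?s1) / wa"
    using wa_pos by (simp add: field_simps)
  also have "\<dots> \<le> 4 * 2 ^ Suc k - 3 + eta ^ k * (eta * wt s) / wa"
    using contraction[of s] eta_pows wa_pos
    by (intro add_left_mono divide_right_mono mult_left_mono) simp_all
  also have "\<dots> = 4 * 2 ^ Suc k - 3 + eta ^ Suc k * wt s / wa" by (simp add: algebra_simps)
  finally show ?case .
qed

lemma sym_UNIV: "(UNIV :: sym set) = {S V1, S VB, S VC, S VD, Sep, Bt True, Bt False}"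
proof -
  have "x \<in> {S V1, S VB, S VC, S VD, Sep, Bt True, Bt False}" for x :: sym
  proof (cases x)
    case (S v) thus ?thesis by (cases v) auto
  next
    case Sep thus ?thesis by simp
  next
    case (Bt b) thus ?thesis by (cases b) auto
  qed
  thus ?thesis by blast
qed

lemma finite_sym: "finite (UNIV :: sym set)"
  by (simp add: sym_UNIV)

lemma card_sym: "card (UNIV :: sym set) = 7"
  by (simp add: sym_UNIV)

lemma geo7: "(\<Sum>i\<le>N. (7::nat) ^ i) \<le> 7 ^ Suc N"
  by (induction N) simp_all

lemma count_bound:
  assumes len: "\<And>w. length w \<le> n \<Longrightarrow> length (code k (snd (dec w))) \<le> N"
  shows "Sigma_count n \<le> 7 ^ Suc N"
proof -
  define L where "L = {xs :: sym list. set xs \<subseteq> UNIV \<and> length xs \<le> N}"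
  define G where "G = (\<lambda>xs. Tset (SOME s. code k s = xs))"
  have fin: "finite L" unfolding L_def by (rule finite_lists_length_le[OF finite_sym])
  have sub: "{orbit_set w | w. length w \<le> n} \<subseteq> G ` L"
  proof
    fix p assume "p \<in> {orbit_set w | w. length w \<le> n}"
    then obtain w where w: "length w \<le> n" "p = orbit_set w" by blast
    let ?c = "code k (snd (dec w))"
    have "code k (SOME s. code k s = ?c) = ?c" by (rule someI[of "\<lambda>s. code k s = ?c"]) simp
    hence "G ?c = Tset (snd (dec w))" unfolding G_def by (rule code_det)
    hence "p = G ?c" using w by (simp add: orbit_Tset)
    moreover have "?c \<in> L" unfolding L_def using len[OF w(1)] by simp
    ultimately show "p \<in> G ` L" by blast
  qed
  have "Sigma_count n \<le> card (G ` L)"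
    unfolding Sigma_count_def by (rule card_mono[OF finite_imageI[OF fin] sub])
  also have "\<dots> \<le> card L" by (rule card_image_le[OF fin])
  also have "card L = (\<Sum>i\<le>N. 7 ^ i)"
    unfolding L_def using card_lists_length_le[OF finite_sym, of N] by (simp only: card_sym)
  also have "\<dots> \<le> 7 ^ Suc N" by (rule geo7)
  finally show ?thesis .
qed

lemma alpha_facts: "0 < alpha" "alpha < 1" "alpha * ln eta / ln 2 = alpha - 1"
proof -
  have lne: "ln eta < 0" using eta_pows by simp
  have l2: "ln 2 > (0::real)" by simp
  define D where "D = ln 2 - ln eta"
  have D: "D > ln 2" using lne by (simp add: D_def)
  have "D > 0" using D l2 by linarith
  have a: "alpha = ln 2 / D" unfolding alpha_def D_def using eta_pows by (simp add: ln_div)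
  show "0 < alpha" unfolding a using l2 \<open>D > 0\<close> by (rule divide_pos_pos)
  show "alpha < 1" unfolding a using D \<open>D > 0\<close> by (simp add: divide_less_eq)
  have "alpha * ln eta / ln 2 = ln eta / D" unfolding a using l2 \<open>D > 0\<close> by (simp add: field_simps)
  also have "\<dots> = alpha - 1" unfolding a using \<open>D > 0\<close> by (simp add: field_simps D_def)
  finally show "alpha * ln eta / ln 2 = alpha - 1" .
qed

lemma eta_powr_mono: "a \<le> b \<Longrightarrow> eta powr b \<le> eta powr a"
proof -
  assume "a \<le> b"
  moreover have "ln eta < 0" using eta_pows by simp
  ultimately have "b * ln eta \<le> a * ln eta" by (simp add: mult_right_mono_neg)
  thus ?thesis using eta_pows by (simp add: powr_def)
qed

lemma main_bound:
  assumes n: "real n \<ge> 2"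
  shows "real (Sigma_count n) \<le> exp (ln 7 * (5 + 1 / (eta * wa)) * real n powr alpha)"
proof -
  define L where "L = log 2 (real n)"
  have npos: "real n > 0" using n by simp
  have L1: "L \<ge> 1" unfolding L_def using n by simp
  define k where "k = nat \<lfloor>alpha * L\<rfloor>"
  have aL: "alpha * L \<ge> 0" using alpha_facts L1 by simp
  have k1: "real k \<le> alpha * L" unfolding k_def using aL by linarith
  have k2: "alpha * L - 1 \<le> real k" unfolding k_def using aL by linarith
  have na: "real n powr alpha \<ge> 1"
    using n alpha_facts by (simp add: ge_one_powr_ge_zero)
  have p2: "(2::real) ^ k \<le> real n powr alpha"
  proof -
    have "(2::real) ^ k = 2 powr real k" by (simp add: powr_realpow)
    also have "\<dots> \<le> 2 powr (L * alpha)" using k1 by (intro powr_mono) (simp_all add: mult.commute)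
    also have "\<dots> = (2 powr L) powr alpha" by (simp add: powr_powr)
    also have "\<dots> = real n powr alpha" unfolding L_def using npos by simp
    finally show ?thesis .
  qed
  have pe: "eta ^ k * real n \<le> real n powr alpha / eta"
  proof -
    have "eta ^ k = eta powr real k" using eta_pows by (simp add: powr_realpow)
    also have "\<dots> \<le> eta powr (alpha * L - 1)" using k2 by (rule eta_powr_mono)
    also have "\<dots> = eta powr (alpha * L) / eta" using eta_pows by (simp add: powr_diff)
    also have "eta powr (alpha * L) = exp ((alpha * ln eta / ln 2) * ln (real n))"
      using eta_pows unfolding L_def by (simp add: powr_def log_def)
    also have "\<dots> = real n powr (alpha - 1)"
      using npos by (simp add: alpha_facts(3) powr_def)
    finally have "eta ^ k \<le> real n powr (alpha - 1) / eta" .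
    hence A: "eta ^ k * real n \<le> real n powr (alpha - 1) / eta * real n"
      using npos by (intro mult_right_mono) simp_all
    have "real n powr (alpha - 1) * real n = real n powr (alpha - 1) * real n powr 1"
      using npos by simp
    also have "\<dots> = real n powr alpha" by (subst powr_add[symmetric]) simp
    finally have B: "real n powr (alpha - 1) * real n = real n powr alpha" .
    have C: "real n powr (alpha - 1) / eta * real n = (real n powr (alpha - 1) * real n) / eta"
      by simp
    show ?thesis using A by (simp only: C B)
  qed
  define X where "X = 4 * 2 ^ k + eta ^ k * real n / wa"
  define N where "N = nat \<lfloor>X\<rfloor>"
  have lenb: "length (code k (snd (dec w))) \<le> N" if "length w \<le> n" for w
  proof -
    have "wt (snd (dec w)) \<le> real n"
      using wt_le_gsum[of w] gsum_le_length[of w] that by linarith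
    hence "eta ^ k * wt (snd (dec w)) / wa \<le> eta ^ k * real n / wa"
      using eta_pows wa_pos by (intro divide_right_mono mult_left_mono) simp_all
    hence "real (length (code k (snd (dec w)))) \<le> X"
      using code_length[of k "snd (dec w)"] unfolding X_def by linarith
    thus ?thesis unfolding N_def by (rule le_nat_floor)
  qed
  have X0: "X \<ge> 0" unfolding X_def using eta_pows wa_pos npos by simp
  have NX: "real N \<le> X" unfolding N_def using X0 by linarith
  have "real (Sigma_count n) \<le> real ((7::nat) ^ Suc N)"
    using count_bound[of n k N] lenb by (simp only: of_nat_le_iff)
  also have "\<dots> = (7::real) ^ Suc N" by simp
  also have "\<dots> = 7 powr real (Suc N)" by (rule powr_realpow[symmetric]) simp
  also have "\<dots> = 7 powr (real N + 1)" by (simp only: of_nat_Suc add.commute)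
  also have "\<dots> \<le> 7 powr (X + 1)" using NX by (intro powr_mono) simp_all
  also have "X + 1 \<le> (5 + 1 / (eta * wa)) * real n powr alpha"
  proof -
    have "eta ^ k * real n / wa \<le> real n powr alpha / eta / wa"
      using pe wa_pos by (intro divide_right_mono) simp_all
    hence "eta ^ k * real n / wa \<le> real n powr alpha / (eta * wa)" by (simp add: divide_divide_eq_left)
    hence "X + 1 \<le> 4 * real n powr alpha + real n powr alpha / (eta * wa) + real n powr alpha"
      unfolding X_def using p2 na by simp
    thus ?thesis by (simp add: algebra_simps)
  qed
  hence "7 powr (X + 1) \<le> 7 powr ((5 + 1 / (eta * wa)) * real n powr alpha)"
    by (intro powr_mono) simp_all
  also have "\<dots> = exp (ln 7 * (5 + 1 / (eta * wa)) * real n powr alpha)"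
    by (simp add: powr_def algebra_simps)
  finally show ?thesis .
qed

theorem lemma4p9:
  shows "\<exists>C::real. C > 0 \<and>
           (\<forall>\<^sub>F n in sequentially. real (Sigma_count n) \<le> exp ((C * real n) powr alpha))"
proof -
  define K where "K = ln 7 * (5 + 1 / (eta * wa))"
  have Kpos: "K > 0" unfolding K_def using eta_pows wa_pos by (simp add: add_pos_pos)
  define C where "C = K powr (1 / alpha)"
  have Cpos: "C > 0" unfolding C_def using Kpos by simp
  have "\<forall>\<^sub>F n in sequentially. real (Sigma_count n) \<le> exp ((C * real n) powr alpha)"
  proof (rule eventually_sequentiallyI[of 2])
    fix n :: nat assume "2 \<le> n"
    hence n: "real n \<ge> 2" by simp
    have "(C * real n) powr alpha = C powr alpha * real n powr alpha"
      by (rule powr_mult)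
    also have "C powr alpha = K"
      unfolding C_def using alpha_facts Kpos by (simp add: powr_powr)
    finally have e: "(C * real n) powr alpha = K * real n powr alpha" .
    show "real (Sigma_count n) \<le> exp ((C * real n) powr alpha)"
      using main_bound[OF n] unfolding e K_def by simp
  qed
  thus ?thesis using Cpos by blast
qed

end
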